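(* Consider the system $$\dot x = \vartheta,\qquad \dot\vartheta = -\lambda\vartheta - xu + x - x^3,\qquad \dot u = -\alpha u - \beta x\vartheta,$$ with parameters $\alpha>0$, $\lambda\ge 0$, $\beta>0$ satisfying $$\alpha\big(\sqrt{\lambda^2+4}+\lambda\big) > 2(\beta-2).$$ Let $L>0$ satisfy $L>\frac{\sqrt{\lambda^2+4}-\lambda}{2}$ and $\frac{\beta L}{\alpha+2L}<1$, set $K=\frac{\beta L}{\alpha+2L}$ and $M=1-K$, let $\vartheta_0>0$ be arbitrary, and let $x_0$ be the positive root of the equation $$\vartheta_0^2 + x^2 - \frac{M}{2}x^4 = 0.$$ Suppose that $$\lambda^2 > 4\Big[\Big(1+\frac{\beta}{2}\Big)x_0^2 - 1\Big].$$ Let $(x^+(t),\vartheta^+(t),u^+(t))$ be the positive outgoing separatrix of the zero saddle, i.e. the nontrivial solution with $\lim_{t\to-\infty}(x^+,\vartheta^+,u^+)(t)=(0,0,0)$ and $x^+(t)>0$ for all sufficiently negative $t$. Then $x^+(t)>0$ for all $t\in(-\infty,+\infty)$.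
   Context: The origin $(0,0,0)$ is a saddle equilibrium of the system with a one-dimensional unstable manifold; its positive separatrix is the branch of the unstable manifold along which $x>0$ as $t\to-\infty$. *)

theory Defs
  imports "HOL-Analysis.Analysis"
begin

end

theory Submission
  imports Defs "HOL-Real_Asymp.Real_Asymp"
begin

lemma mono_deriv:
  fixes g g' :: "real \<Rightarrow> real"
  assumes "\<And>t. (g has_real_derivative g' t) (at t)" "\<And>t. a < t \<Longrightarrow> t < b \<Longrightarrow> 0 \<le> g' t" "a \<le> b"
  shows "g a \<le> g b"
proof (cases "a = b")
  case False
  then have "a < b" using assms(3) by simp
  from MVT2[OF this, of g g'] assms(1) obtain z where "z > a" "z < b" "g b - g a = (b - a) * g' z" by blast
  moreover have "0 \<le> g' z" using assms(2) \<open>z>a\<close> \<open>z<b\<close> by simp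
  moreover have "(b - a) * g' z \<ge> 0" using \<open>a<b\<close> \<open>0 \<le> g' z\<close> by simp
  ultimately show ?thesis by linarith
qed simp

lemma smono_deriv:
  fixes g g' :: "real \<Rightarrow> real"
  assumes "\<And>t. (g has_real_derivative g' t) (at t)" "\<And>t. a < t \<Longrightarrow> t < b \<Longrightarrow> 0 < g' t" "a < b"
  shows "g a < g b"
proof -
  from MVT2[OF assms(3), of g g'] assms(1) obtain z where "z > a" "z < b" "g b - g a = (b - a) * g' z" by blast
  moreover have "0 < g' z" using assms(2) \<open>z>a\<close> \<open>z<b\<close> by simp
  moreover have "(b - a) * g' z > 0" using assms(3) \<open>0 < g' z\<close> by simp
  ultimately show ?thesis by linarith
qed

lemma nonneg_from_bot:
  fixes g g' :: "real \<Rightarrow> real"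
  assumes "\<And>t. (g has_real_derivative g' t) (at t)" "\<And>t. t < b \<Longrightarrow> 0 \<le> g' t"
    "(g \<longlongrightarrow> 0) at_bot" "t \<le> b"
  shows "0 \<le> g t"
proof -
  have "\<forall>s\<le>t. g s \<le> g t"
    using mono_deriv[of g g'] assms(1,2,4) by (metis le_less_trans less_le_trans)
  then have "eventually (\<lambda>s. g s \<le> g t) at_bot" by (auto simp: eventually_at_bot_linorder)
  from tendsto_upperbound[OF assms(3) this trivial_limit_at_bot_linorder] show ?thesis .
qed

lemma lim_exp_mult:
  fixes q :: "real \<Rightarrow> real"
  assumes "a > 0" "(q \<longlongrightarrow> l) at_bot"
  shows "((\<lambda>t. exp (a*t) * q t) \<longlongrightarrow> 0) at_bot"
proof -
  have "((\<lambda>t. exp (a*t)) \<longlongrightarrow> 0) at_bot" using assms(1) by real_asymp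
  from tendsto_mult[OF this assms(2)] show ?thesis by simp
qed


theorem lemma3:
  fixes \<alpha> lam \<beta> L th0 x0 :: real
    and x th u :: "real \<Rightarrow> real"
  assumes par: "\<alpha> > 0" "lam \<ge> 0" "\<beta> > 0"
    and par_ineq: "\<alpha> * (sqrt (lam^2 + 4) + lam) > 2 * (\<beta> - 2)"
    and L: "L > 0" "L > (sqrt (lam^2 + 4) - lam) / 2" "\<beta> * L / (\<alpha> + 2 * L) < 1"
    and th0pos: "th0 > 0"
    and x0: "x0 > 0"
      "th0^2 + x0^2 - (1 - \<beta> * L / (\<alpha> + 2 * L)) / 2 * x0^4 = 0"
    and lamcond: "lam^2 > 4 * ((1 + \<beta> / 2) * x0^2 - 1)"
    and ode: "\<And>t. (x has_real_derivative th t) (at t)"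
      "\<And>t. (th has_real_derivative
               (- lam * th t - x t * u t + x t - x t ^ 3)) (at t)"
      "\<And>t. (u has_real_derivative (- \<alpha> * u t - \<beta> * x t * th t)) (at t)"
    and lim: "(x \<longlongrightarrow> 0) at_bot" "(th \<longlongrightarrow> 0) at_bot" "(u \<longlongrightarrow> 0) at_bot"
    and nontriv: "\<exists>t. (x t, th t, u t) \<noteq> (0, 0, 0)"
    and pos: "\<forall>\<^sub>F t in at_bot. x t > 0"
  shows "\<forall>t. x t > 0"
proof (rule ccontr)
  assume "\<not> (\<forall>t. x t > 0)"
  then have ex: "\<exists>t. x t \<le> 0" by (meson not_less)
  define K where "K = \<beta>*L/(\<alpha>+2*L)"
  define M where "M = 1 - K"
  define \<kappa> where "\<kappa> = L^2 + lam*L - 1"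
  have apL: "\<alpha> + 2*L > 0" using par L by simp
  have K0: "0 \<le> K" using par L apL by (simp add: K_def)
  have K1: "K < 1" using L(3) K_def by simp
  have M0: "M > 0" using K1 M_def by simp
  have KL: "K*(\<alpha>+2*L) = \<beta>*L" using apL by (simp add: K_def)
  have K2: "2*K - \<beta> \<le> 0"
  proof -
    have "2*K - \<beta> = - (\<beta>*\<alpha>)/(\<alpha>+2*L)" using apL by (simp add: K_def field_simps)
    also have "\<dots> \<le> 0" using par apL by simp
    finally show ?thesis .
  qed
  have kpos: "\<kappa> > 0"
  proof -
    have s: "sqrt(lam^2+4)^2 = lam^2+4" by simp
    have s0: "sqrt(lam^2+4) \<ge> 0" by simp
    have "sqrt(lam^2+4) < 2*L + lam" using L(2) by simp
    then have "sqrt(lam^2+4)^2 < (2*L + lam)^2" using s0 by (intro power_strict_mono) auto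
    then have "lam^2 + 4 < 4*L^2 + 4*L*lam + lam^2" using s by (simp add: power2_eq_square algebra_simps)
    then show ?thesis unfolding \<kappa>_def by (simp add: algebra_simps power2_eq_square)
  qed
  have x0eq: "th0^2 = (M/2)*(x0^2)^2 - x0^2" using x0(2) unfolding M_def K_def by (simp add: power_mult[symmetric] algebra_simps)
  have Mx0: "M * x0^2 > 2"
  proof -
    have "x0^2 * (M * x0^2 - 2) > 0" using x0eq th0pos by (simp add: power2_eq_square algebra_simps) (smt (verit) mult_pos_pos th0pos)
    moreover have "x0^2 > 0" using x0 by simp
    ultimately show ?thesis by (simp add: zero_less_mult_iff)
  qed
  have cx: "\<And>t. isCont x t" using ode(1) DERIV_isCont by blast
  have cth: "\<And>t. isCont th t" using ode(2) DERIV_isCont by blast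
  have conx: "continuous_on UNIV x" by (simp add: continuous_at_imp_continuous_on cx)
  have conth: "continuous_on UNIV th" by (simp add: continuous_at_imp_continuous_on cth)

  obtain T where T: "\<forall>t\<le>T. x t > 0" using pos by (auto simp: eventually_at_bot_linorder)
  define C1 where "C1 = {t. x t \<le> 0}"
  have cC1: "closed C1" unfolding C1_def by (rule closed_Collect_le[OF conx continuous_on_const])
  have nC1: "C1 \<noteq> {}" using ex C1_def by auto
  have bC1: "bdd_below C1"
    by (rule bdd_belowI[of _ T]) (use T C1_def in \<open>force simp: not_le[symmetric]\<close>)
  define t1 where "t1 = Inf C1"
  have "t1 \<in> C1" unfolding t1_def by (rule closed_contains_Inf[OF nC1 bC1 cC1])
  hence xt1: "x t1 \<le> 0" by (simp add: C1_def)
  have xpos: "\<And>t. t < t1 \<Longrightarrow> x t > 0"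
  proof (rule ccontr)
    fix t assume "t < t1" "\<not> x t > 0"
    then have "t \<in> C1" by (simp add: C1_def)
    then have "t1 \<le> t" unfolding t1_def using bC1 by (rule cInf_lower)
    then show False using \<open>t<t1\<close> by simp
  qed

  obtain T0 where T0: "\<forall>t\<le>T0. x t > 0 \<and> -\<kappa> < u t + x t^2"
  proof -
    have "((\<lambda>t. u t + x t^2) \<longlongrightarrow> 0 + 0^2) at_bot"
      by (intro tendsto_intros lim)
    then have "eventually (\<lambda>t. -\<kappa> < u t + x t^2) at_bot"
      using kpos by (intro order_tendstoD(1)) auto
    then have "eventually (\<lambda>t. x t > 0 \<and> -\<kappa> < u t + x t^2) at_bot"
      using pos by (simp add: eventually_conj)
    then show ?thesis using that by (auto simp: eventually_at_bot_linorder)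
  qed
  define h where "h = (\<lambda>t. exp((lam+L)*t) * (th t - L * x t))"
  have dh: "\<And>t. (h has_real_derivative exp((lam+L)*t) * (x t * (-\<kappa> - u t - x t^2))) (at t)"
    unfolding h_def
    by (rule derivative_eq_intros ode refl | simp add: \<kappa>_def algebra_simps power2_eq_square power3_eq_cube)+
  have hlim: "(h \<longlongrightarrow> 0) at_bot"
    unfolding h_def
    by (rule lim_exp_mult[of _ _ "0 - L*0"], use par L in simp, intro tendsto_intros lim)
  have hnegder: "\<And>t. x t > 0 \<Longrightarrow> -\<kappa> - u t - x t^2 < 0 \<Longrightarrow> exp((lam+L)*t) * (x t * (-\<kappa> - u t - x t^2)) < 0"
    by (simp add: mult_pos_neg)
  have yneg0: "\<And>t. t \<le> T0 \<Longrightarrow> th t - L * x t < 0"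
  proof -
    fix t assume t: "t \<le> T0"
    have d': "\<And>t. ((\<lambda>t. - h t) has_real_derivative - (exp((lam+L)*t) * (x t * (-\<kappa> - u t - x t^2)))) (at t)"
      by (rule DERIV_minus[OF dh])
    have l': "((\<lambda>t. - h t) \<longlongrightarrow> 0) at_bot" using tendsto_minus[OF hlim] by simp
    have neg: "exp((lam+L)*r) * (x r * (-\<kappa> - u r - x r^2)) < 0" if "r \<le> T0" for r
      using T0 that by (intro hnegder) auto
    have "0 \<le> - h (t - 1)"
    proof (rule nonneg_from_bot[OF d' _ l', of T0])
      fix r assume "r < T0" then show "0 \<le> - (exp((lam+L)*r) * (x r * (-\<kappa> - u r - x r^2)))"
        using neg[of r] by simp
    qed (use t in simp)
    moreover have "- h (t-1) < - h t"
    proof (rule smono_deriv[OF d'])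
      fix r assume "t - 1 < r" "r < t" then show "0 < - (exp((lam+L)*r) * (x r * (-\<kappa> - u r - x r^2)))"
        using neg[of r] t by simp
    qed simp
    ultimately have "h t > 0 \<or> h t < 0" by linarith
    then have "h t < 0" using \<open>0 \<le> - h (t - 1)\<close> \<open>- h (t-1) < - h t\<close> by linarith
    then show "th t - L * x t < 0" unfolding h_def by (simp add: mult_less_0_iff)
  qed
  define g where "g = (\<lambda>t. exp(\<alpha>*t) * (u t + K * x t^2))"
  have dg: "\<And>t. (g has_real_derivative exp(\<alpha>*t) * (\<alpha>*K*x t^2 + (2*K-\<beta>)*x t*th t)) (at t)"
    unfolding g_def
    by (rule derivative_eq_intros ode refl | simp add: algebra_simps power2_eq_square)+
  have glim: "(g \<longlongrightarrow> 0) at_bot"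
    unfolding g_def
    by (rule lim_exp_mult[of _ _ "0 + K*0^2"], use par in simp, intro tendsto_intros lim)
  have zlem: "u b + K * x b^2 \<ge> 0" if b: "b < t1" "\<forall>r<b. th r \<le> L * x r" for b
  proof -
    have "0 \<le> g b"
    proof (rule nonneg_from_bot[OF dg _ glim, of b])
      fix r assume r: "r < b"
      have xs: "x r > 0" using xpos r b by simp
      have "(2*K-\<beta>)*x r \<le> 0" using K2 xs by (simp add: mult_nonpos_nonneg)
      then have "(2*K-\<beta>)*x r*th r \<ge> (2*K-\<beta>)*x r*(L*x r)"
        using b r by (intro mult_left_mono_neg) auto
      moreover have "\<alpha>*K*x r^2 + (2*K-\<beta>)*x r*(L*x r) = x r^2 * (K*(\<alpha>+2*L) - \<beta>*L)"
        by (simp add: algebra_simps power2_eq_square)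
      ultimately have "\<alpha>*K*x r^2 + (2*K-\<beta>)*x r*th r \<ge> 0" using KL by simp
      then show "0 \<le> exp(\<alpha>*r) * (\<alpha>*K*x r^2 + (2*K-\<beta>)*x r*th r)" by simp
    qed simp
    then show ?thesis unfolding g_def by (simp add: zero_le_mult_iff)
  qed
  have yneg: "th t - L * x t < 0" if t': "t' < t1" and tt: "t \<le> t'" for t t'
  proof (rule ccontr)
    assume "\<not> th t - L * x t < 0"
    define C where "C = {r. r \<le> t' \<and> 0 \<le> th r - L * x r}"
    have cC: "closed C" unfolding C_def
      by (intro closed_Collect_conj closed_Collect_le continuous_intros conth conx)
    have nC: "C \<noteq> {}" using \<open>\<not> th t - L * x t < 0\<close> tt by (auto simp: C_def)
    have bC: "bdd_below C"
      by (rule bdd_belowI[of _ T0]) (use yneg0 C_def in \<open>force simp: not_le[symmetric]\<close>)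
    define b where "b = Inf C"
    have "b \<in> C" unfolding b_def by (rule closed_contains_Inf[OF nC bC cC])
    then have bt: "b \<le> t'" and yb: "0 \<le> th b - L * x b" by (auto simp: C_def)
    have before: "th r - L * x r < 0" if "r < b" for r
    proof (rule ccontr)
      assume "\<not> th r - L * x r < 0"
      then have "r \<in> C" using that bt by (auto simp: C_def)
      then have "b \<le> r" unfolding b_def using bC by (rule cInf_lower)
      then show False using that by simp
    qed
    have zb: "u b + K * x b^2 \<ge> 0"
      by (rule zlem) (use bt t' before in \<open>auto simp: less_imp_le\<close>)
    have xb: "x b > 0" using xpos bt t' by simp
    have "-\<kappa> - u b - x b^2 \<le> -\<kappa> - M * x b^2" using zb by (simp add: M_def algebra_simps)
    also have "\<dots> < 0"
    proof -
      have "M * x b^2 \<ge> 0" using M0 by simp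
      then show ?thesis using kpos by linarith
    qed
    finally have "exp((lam+L)*b) * (x b * (-\<kappa> - u b - x b^2)) < 0" using hnegder xb by blast
    from DERIV_neg_dec_left[OF dh this] obtain d where d: "d > 0" "\<forall>k>0. k < d \<longrightarrow> h b < h (b - k)" by blast
    have "h b \<ge> 0" unfolding h_def using yb by simp
    moreover have "h b < h (b - d/2)" using d by simp
    ultimately have "h (b - d/2) > 0" by linarith
    then have "th (b - d/2) - L * x (b - d/2) > 0" unfolding h_def by (simp add: zero_less_mult_iff)
    moreover have "th (b - d/2) - L * x (b - d/2) < 0" using before d by simp
    ultimately show False by simp
  qed
  have zpos: "\<And>t. t < t1 \<Longrightarrow> u t + K*x t^2 \<ge> 0"
  proof (rule zlem)
    fix t assume "t < t1"
    show "\<forall>r<t. th r \<le> L * x r"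
    proof (intro allI impI)
      fix r assume "r < t"
      then have "th r - L * x r < 0" using yneg[of t r] \<open>t < t1\<close> by simp
      then show "th r \<le> L * x r" by simp
    qed
  qed

  define W where "W = (\<lambda>t. th t^2 - x t^2 + M/2 * x t^4)"
  have dW: "\<And>t. (W has_real_derivative (-2*lam*th t^2 - 2*x t*th t*(u t + K*x t^2))) (at t)"
    unfolding W_def
    by (rule derivative_eq_intros ode refl | simp add: M_def field_simps power2_eq_square power3_eq_cube)+
  have Wlim: "(W \<longlongrightarrow> 0) at_bot"
  proof -
    have "(W \<longlongrightarrow> 0^2 - 0^2 + M/2 * 0^4) at_bot" unfolding W_def by (intro tendsto_intros lim)
    then show ?thesis by simp
  qed
  have gb1: "(M/2)*X^2 - X < th0^2" if "0 \<le> X" "X < x0^2" for X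
  proof -
    have "(M/2)*X^2 - X - (X/x0^2)*((M/2)*(x0^2)^2 - x0^2) = (M/2)*X*(X - x0^2)"
      using x0 by (simp add: field_simps power2_eq_square)
    then have "(M/2)*X^2 - X - (X/x0^2)*th0^2 = (M/2)*X*(X - x0^2)" by (simp only: x0eq)
    moreover have "(M/2)*X*(X - x0^2) \<le> 0" using that M0 by (simp add: mult_nonneg_nonpos)
    moreover have "(X/x0^2)*th0^2 < th0^2" using that th0pos x0 by (simp add: divide_less_eq)
    ultimately show ?thesis by linarith
  qed
  have gb2: "th0^2 \<le> (M/2)*X^2 - X" if "x0^2 \<le> X" for X
  proof -
    have "(M/2)*X^2 - X - ((M/2)*(x0^2)^2 - x0^2) = (X - x0^2)*((M/2)*(X + x0^2) - 1)"
      by (simp add: field_simps power2_eq_square)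
    moreover have "(M/2)*(X + x0^2) - 1 \<ge> 0"
    proof -
      have "M*X \<ge> M*x0^2" using that M0 by simp
      then show ?thesis using Mx0 by (simp add: algebra_simps)
    qed
    moreover have "X - x0^2 \<ge> 0" using that by simp
    ultimately show ?thesis using x0eq by (metis diff_ge_0_iff_ge mult_nonneg_nonneg)
  qed
  have Wge: "W t \<ge> th0^2" if "x t \<ge> x0" for t
  proof -
    have "x0^2 \<le> x t^2" using that x0 by (simp add: power_mono)
    from gb2[OF this] have "th0^2 \<le> (M/2)*(x t^2)^2 - x t^2" .
    then have "th0^2 \<le> M/2 * x t^4 - x t^2" by (simp add: power_mult[symmetric] algebra_simps)
    moreover have "th t^2 \<ge> 0" by simp
    ultimately show ?thesis unfolding W_def by linarith
  qed
  have xlt: "x t < x0" if t': "t' < t1" and tt: "t \<le> t'" for t t'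
  proof (rule ccontr)
    assume "\<not> x t < x0"
    obtain T2 where T2: "\<forall>r\<le>T2. x r < x0"
    proof -
      have "eventually (\<lambda>r. x r < x0) at_bot" using x0 by (intro order_tendstoD(2)[OF lim(1)]) auto
      then show ?thesis using that by (auto simp: eventually_at_bot_linorder)
    qed
    define C where "C = {r. r \<le> t' \<and> x0 \<le> x r}"
    have cC: "closed C" unfolding C_def
      by (intro closed_Collect_conj closed_Collect_le continuous_intros conx)
    have nC: "C \<noteq> {}" using \<open>\<not> x t < x0\<close> tt by (auto simp: C_def)
    have bC: "bdd_below C"
      by (rule bdd_belowI[of _ T2]) (use T2 C_def in \<open>force simp: not_le[symmetric]\<close>)
    define t2 where "t2 = Inf C"
    have "t2 \<in> C" unfolding t2_def by (rule closed_contains_Inf[OF nC bC cC])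
    then have t2t: "t2 \<le> t'" and xt2: "x0 \<le> x t2" by (auto simp: C_def)
    have t2t1: "t2 < t1" using t2t t' by simp
    have before: "x r < x0" if "r < t2" for r
    proof (rule ccontr)
      assume "\<not> x r < x0"
      then have "r \<in> C" using that t2t by (auto simp: C_def)
      then have "t2 \<le> r" unfolding t2_def using bC by (rule cInf_lower)
      then show False using that by simp
    qed
    have th2: "th t2 \<ge> 0"
    proof (rule ccontr)
      assume "\<not> th t2 \<ge> 0"
      then have "th t2 < 0" by simp
      from DERIV_neg_dec_left[OF ode(1) this] obtain d where d: "d > 0" "\<forall>k>0. k < d \<longrightarrow> x t2 < x (t2 - k)" by blast
      then have "x t2 < x (t2 - d/2)" by simp
      moreover have "x (t2 - d/2) < x0" using before d by simp
      ultimately show False using xt2 by simp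
    qed
    have z2: "u t2 + K*x t2^2 \<ge> 0" using zpos t2t1 by simp
    obtain d where d: "d > 0" "\<And>k. 0 < k \<Longrightarrow> k < d \<Longrightarrow> th (t2 - k) > 0"
    proof (cases "th t2 > 0")
      case True
      have "eventually (\<lambda>r. th r > 0) (at t2)"
        using cth[of t2] True unfolding isCont_def by (intro order_tendstoD(1)) auto
      then obtain d where "d > 0" "\<forall>r. r \<noteq> t2 \<and> dist r t2 < d \<longrightarrow> th r > 0"
        by (auto simp: eventually_at)
      then show ?thesis using that[of d] by (auto simp: dist_real_def)
    next
      case False
      then have th0': "th t2 = 0" using th2 by simp
      have xt2p: "x t2 > 0" using xt2 x0 by simp
      have "M * x0^2 \<le> M * x t2^2" using M0 xt2 x0 by (simp add: power_mono)
      then have "1 - u t2 - x t2^2 < 0" using z2 Mx0 by (simp add: M_def algebra_simps)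
      then have "x t2 * (1 - u t2 - x t2^2) < 0" using xt2p by (simp add: mult_pos_neg)
      then have "- lam * th t2 - x t2 * u t2 + x t2 - x t2 ^ 3 < 0"
        using th0' by (simp add: algebra_simps power2_eq_square power3_eq_cube)
      from DERIV_neg_dec_left[OF ode(2) this] obtain d where "d > 0" "\<forall>k>0. k < d \<longrightarrow> th t2 < th (t2 - k)" by blast
      then show ?thesis using that[of d] th0' by auto
    qed
    define a where "a = t2 - d/2"
    have Wt2: "W t2 \<ge> th0^2" using Wge xt2 by simp
    have Wdec: "W t2 \<le> W r" if "r < t2" "\<forall>q. r < q \<and> q < t2 \<longrightarrow> th q > 0" for r
    proof -
      have "- W r \<le> - W t2"
      proof (rule mono_deriv[OF DERIV_minus[OF dW]])
        fix q assume q: "r < q" "q < t2"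
        have "x q > 0" using xpos q t2t1 by simp
        moreover have "th q > 0" using that q by simp
        moreover have "u q + K*x q^2 \<ge> 0" using zpos q t2t1 by simp
        ultimately have "x q * th q * (u q + K*x q^2) \<ge> 0" by simp
        moreover have "lam * th q^2 \<ge> 0" using par by simp
        ultimately show "0 \<le> - (-2*lam*th q^2 - 2*x q*th q*(u q + K*x q^2))" by simp
      qed (use that in simp)
      then show ?thesis by simp
    qed
    show False
    proof (cases "\<exists>r\<le>a. th r \<le> 0")
      case True
      define C3 where "C3 = {r. r \<le> a \<and> th r \<le> 0}"
      have cC3: "closed C3" unfolding C3_def
        by (intro closed_Collect_conj closed_Collect_le continuous_intros conth)
      have nC3: "C3 \<noteq> {}" using True by (auto simp: C3_def)
      have bC3: "bdd_above C3" by (rule bdd_aboveI[of _ a]) (auto simp: C3_def)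
      define r0 where "r0 = Sup C3"
      have "r0 \<in> C3" unfolding r0_def by (rule closed_contains_Sup[OF nC3 bC3 cC3])
      then have r0a: "r0 \<le> a" and thr0: "th r0 \<le> 0" by (auto simp: C3_def)
      have r0t2: "r0 < t2" using r0a d by (simp add: a_def)
      have after: "th q > 0" if "r0 < q" "q < t2" for q
      proof (cases "q \<le> a")
        case True
        show ?thesis
        proof (rule ccontr)
          assume "\<not> th q > 0"
          then have "q \<in> C3" using True by (auto simp: C3_def)
          then have "q \<le> r0" unfolding r0_def using bC3 by (rule cSup_upper)
          then show False using that by simp
        qed
      next
        case False
        then show ?thesis using d(2)[of "t2 - q"] that by (simp add: a_def)
      qed
      have "th r0 \<ge> 0"
      proof (rule tendsto_lowerbound)
        show "(th \<longlongrightarrow> th r0) (at_right r0)"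
          using cth[of r0] unfolding isCont_def by (rule tendsto_mono[OF at_le, rotated]) simp
        show "eventually (\<lambda>q. 0 \<le> th q) (at_right r0)"
          using eventually_at_right_real[OF r0t2] by eventually_elim (use after in \<open>auto simp: less_imp_le\<close>)
      qed (simp add: trivial_limit_at_right_real)
      then have thr00: "th r0 = 0" using thr0 by simp
      have xr0: "0 < x r0" "x r0 < x0" using xpos before r0t2 t2t1 by auto
      have "W r0 = (M/2)*(x r0^2)^2 - x r0^2" unfolding W_def using thr00 by (simp add: power_mult[symmetric])
      also have "\<dots> < th0^2" using xr0 by (intro gb1) (auto simp: power_strict_mono)
      finally have "W r0 < th0^2" .
      moreover have "W t2 \<le> W r0" using Wdec[of r0] r0t2 after by auto
      ultimately show False using Wt2 by simp
    next
      case False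
      then have thp: "th q > 0" if "q < t2" for q
        using d(2)[of "t2 - q"] that by (cases "q \<le> a") (auto simp: a_def)
      have "0 \<le> - W t2"
      proof (rule nonneg_from_bot[OF DERIV_minus[OF dW]])
        fix q assume q: "q < t2"
        have "x q > 0" using xpos q t2t1 by simp
        moreover have "th q > 0" using thp q by simp
        moreover have "u q + K*x q^2 \<ge> 0" using zpos q t2t1 by simp
        ultimately have "x q * th q * (u q + K*x q^2) \<ge> 0" by simp
        moreover have "lam * th q^2 \<ge> 0" using par by simp
        ultimately show "0 \<le> - (-2*lam*th q^2 - 2*x q*th q*(u q + K*x q^2))" by simp
      next
        show "((\<lambda>t. - W t) \<longlongrightarrow> 0) at_bot" using tendsto_minus[OF Wlim] by simp
      qed simp
      then show False using Wt2 th0pos by (smt (verit) zero_less_power)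
    qed
  qed

  have xlt': "\<And>t. t < t1 \<Longrightarrow> x t < x0" using xlt by blast
  define c where "c = (1 + \<beta>/2)*x0^2 - 1"
  define D where "D = lam^2 - 4*c"
  have Dpos: "D > 0" using lamcond by (simp add: D_def c_def)
  define sD where "sD = sqrt D"
  have sDpos: "sD > 0" using Dpos by (simp add: sD_def)
  have sD2: "sD^2 = D" using Dpos by (simp add: sD_def)
  define a1 where "a1 = (lam + sD)/2"
  define r2 where "r2 = (sD - lam)/2"
  have a1pos: "a1 > 0" using sDpos par by (simp add: a1_def)
  have hr1: "lam = a1 - r2" by (simp add: a1_def r2_def field_simps)
  have hr2: "c = - (a1 * r2)"
  proof -
    have "a1 * r2 = (sD^2 - lam^2)/4" by (simp add: a1_def r2_def power2_eq_square algebra_simps)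
    then show ?thesis using sD2 by (simp add: D_def)
  qed
  define P where "P = (\<lambda>t. exp(\<alpha>*t) * (u t + \<beta>/2 * x t^2 - \<beta>/2 * x0^2))"
  have dP: "\<And>t. (P has_real_derivative exp(\<alpha>*t) * (\<alpha>*\<beta>/2 * (x t^2 - x0^2))) (at t)"
    unfolding P_def
    by (rule derivative_eq_intros ode refl | simp add: field_simps power2_eq_square)+
  have Plim: "(P \<longlongrightarrow> 0) at_bot"
    unfolding P_def
    by (rule lim_exp_mult[of _ _ "0 + \<beta>/2 * 0^2 - \<beta>/2 * x0^2"], use par in simp, intro tendsto_intros lim)
  have uup: "u t \<le> \<beta>/2 * (x0^2 - x t^2)" if t: "t < t1" for t
  proof -
    have "0 \<le> - P t"
    proof (rule nonneg_from_bot[OF DERIV_minus[OF dP]])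
      fix q assume q: "q < t"
      have "x q^2 < x0^2" using xpos[of q] xlt'[of q] q t by (simp add: power_strict_mono)
      then have "\<alpha>*\<beta>/2 * (x q^2 - x0^2) \<le> 0" using par by (simp add: mult_nonneg_nonpos)
      then show "0 \<le> - (exp(\<alpha>*q) * (\<alpha>*\<beta>/2 * (x q^2 - x0^2)))" by (simp add: mult_nonneg_nonpos)
    next
      show "((\<lambda>t. - P t) \<longlongrightarrow> 0) at_bot" using tendsto_minus[OF Plim] by simp
    qed simp
    then have "u t + \<beta>/2 * x t^2 - \<beta>/2 * x0^2 \<le> 0" unfolding P_def by (simp add: mult_le_0_iff)
    then show ?thesis by (simp add: algebra_simps)
  qed
  define G where "G = (\<lambda>t. exp(a1*t) * (th t - r2 * x t))"
  have dG0: "\<And>t. (G has_real_derivative exp(a1*t) * a1 * (th t - r2 * x t) + exp(a1*t) * ((- lam * th t - x t * u t + x t - x t ^ 3) - r2 * th t)) (at t)"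
    unfolding G_def
    by (rule derivative_eq_intros ode refl | simp)+
  have dG: "\<And>t. (G has_real_derivative exp(a1*t) * (x t * (1 + c - u t - x t^2))) (at t)"
  proof -
    fix t
    have "a1 * (th t - r2 * x t) + ((- lam * th t - x t * u t + x t - x t ^ 3) - r2 * th t)
        = x t * (1 + c - u t - x t^2)"
      unfolding hr1 hr2 by (simp add: algebra_simps power2_eq_square power3_eq_cube)
    moreover have "exp(a1*t) * a1 * (th t - r2 * x t) + exp(a1*t) * ((- lam * th t - x t * u t + x t - x t ^ 3) - r2 * th t)
       = exp(a1*t) * (a1 * (th t - r2 * x t) + ((- lam * th t - x t * u t + x t - x t ^ 3) - r2 * th t))"
      by (simp add: algebra_simps)
    ultimately show "?thesis t" using dG0[of t] by simp
  qed
  have Glim: "(G \<longlongrightarrow> 0) at_bot"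
    unfolding G_def
    by (rule lim_exp_mult[of _ _ "0 - r2*0"], use a1pos in simp, intro tendsto_intros lim)
  have wpos: "th t - r2 * x t \<ge> 0" if t: "t < t1" for t
  proof -
    have "0 \<le> G t"
    proof (rule nonneg_from_bot[OF dG _ Glim])
      fix q assume q: "q < t"
      have xq: "0 < x q" "x q < x0" using xpos[of q] xlt'[of q] q t by auto
      have "x q^2 < x0^2" using xq by (simp add: power_strict_mono)
      have "u q \<le> \<beta>/2 * (x0^2 - x q^2)" using uup q t by simp
      moreover have "\<beta>/2 * x q^2 \<ge> 0" using par by simp
      ultimately have "1 + c - u q - x q^2 \<ge> 0" using \<open>x q^2 < x0^2\<close>
        by (simp add: c_def algebra_simps)
      then show "0 \<le> exp(a1*q) * (x q * (1 + c - u q - x q^2))" using xq by simp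
    qed simp
    then show ?thesis unfolding G_def by (simp add: zero_le_mult_iff)
  qed
  define H where "H = (\<lambda>t. exp(- r2*t) * x t)"
  have dH: "\<And>t. (H has_real_derivative exp(- r2*t) * (th t - r2 * x t)) (at t)"
    unfolding H_def
    by (rule derivative_eq_intros ode refl | simp add: algebra_simps)+
  have "H (t1 - 1) \<le> H t1"
    by (rule mono_deriv[OF dH]) (use wpos in auto)
  moreover have "H (t1 - 1) > 0" unfolding H_def using xpos[of "t1 - 1"] by simp
  ultimately have "H t1 > 0" by simp
  then have "x t1 > 0" unfolding H_def by (simp add: zero_less_mult_iff)
  then show False using xt1 by simp
qed

end
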